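(* Let $U\subset\mathbb{C}$ be a domain conformally isomorphic to $\mathbb{D}$, let $U'=U_1\cup\dots\cup U_N$ be relatively compact in $U$ with the $U_i$ pairwise disjoint domains each conformally isomorphic to $\mathbb{D}$, and let $f:U'\to U$ be a proper holomorphic map of degree $d>1$ such that $K_f=J_f$ is a Cantor set containing all critical points of $f$. Let $w\in U\setminus U'$, let $w_0,\dots,w_{d-1}$ be the $d$ distinct preimages of $w$ under $f$, and let $\phi:\mathbb{D}\to U\setminus J_f$ be a universal covering map with $\phi(0)=w$. Then there exist $d$ univalent holomorphic maps $g_0,\dots,g_{d-1}:\mathbb{D}\to\mathbb{D}$ with $f\circ\phi\circ g_i=\phi$ and $\phi(g_i(0))=w_i$ for each $i$. These satisfy $\phi(g_j(z))\neq\phi(g_{j'}(z))$ for all $z\in\mathbb{D}$ and $j\neq j'$, i.e. for every $z\in\mathbb{D}$ the points $\phi(g_j(z))$, $j=0,\dots,d-1$, are the $d$ distinct preimages of $\phi(z)$ under $f$. In particular $$f^{-1}(U\setminus J_f)=U'\setminus J_f=\bigcup_{i=0}^{d-1}\phi(g_i(\mathbb{D})).$$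
   Context: $K_f=\{z\in U' : f^n(z)\in U' \ \forall n\in\mathbb{N}\}$ is the filled-in Julia set and $J_f=\partial K_f$ the Julia set. The degree of $f$ is the sum of the degrees of the restrictions $f:U_i\to U$. *)

theory Defs
  imports "HOL-Complex_Analysis.Complex_Analysis"
begin

definition conformal_disc :: "complex set \<Rightarrow> bool" where
  "conformal_disc U \<longleftrightarrow> open U \<and> connected U \<and>
     (\<exists>h. h holomorphic_on U \<and> bij_betw h U (ball 0 1))"

definition holo_degree :: "(complex \<Rightarrow> complex) \<Rightarrow> complex set \<Rightarrow> complex set \<Rightarrow> nat \<Rightarrow> bool" where
  "holo_degree g V U d \<longleftrightarrow>
     (\<forall>y\<in>U. (\<Sum>z\<in>{z\<in>V. g z = y}. nat (zorder (\<lambda>x. g x - y) z)) = d)"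

definition filled_julia :: "(complex \<Rightarrow> complex) \<Rightarrow> complex set \<Rightarrow> complex set" where
  "filled_julia f U' = {z \<in> U'. \<forall>n::nat. (f ^^ n) z \<in> U'}"

definition julia :: "(complex \<Rightarrow> complex) \<Rightarrow> complex set \<Rightarrow> complex set" where
  "julia f U' = frontier (filled_julia f U')"

definition cantor_set :: "complex set \<Rightarrow> bool" where
  "cantor_set S \<longleftrightarrow> S \<noteq> {} \<and> compact S \<and> (\<forall>x\<in>S. x islimpt S) \<and>
     (\<forall>x\<in>S. connected_component_set S x = {x})"

end

theory Submission
  imports Defs
begin


lemma proper_local_covering:
  fixes f :: "complex \<Rightarrow> complex"
  assumes openY: "open Y" and openX: "open X" and holf: "f holomorphic_on Y"
    and dnz: "\<And>z. z \<in> Y \<Longrightarrow> deriv f z \<noteq> 0" and surj: "f ` Y = X"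
    and fib: "\<And>y. y \<in> X \<Longrightarrow> compact {x\<in>Y. f x = y}"
    and clo: "\<And>E. closedin (top_of_set Y) E \<Longrightarrow> closedin (top_of_set X) (f ` E)"
  shows "covering_space Y f X"
proof (rule covering_spaceI)
  show contf: "continuous_on Y f" using holf holomorphic_on_imp_continuous_on by blast
  show "f ` Y = X" by (rule surj)
  fix y assume y: "y \<in> X"
  define F where "F = {x\<in>Y. f x = y}"
  have cF: "compact F" using fib[OF y] by (simp add: F_def)
  have "\<forall>x\<in>F. \<exists>R>0. ball x R \<subseteq> Y \<and> inj_on f (ball x R)"
  proof
    fix x assume "x \<in> F"
    then have "x \<in> Y" by (simp add: F_def)
    then obtain R where "R > 0" "ball x R \<subseteq> Y" "inj_on f (ball x R)"
      using has_complex_derivative_locally_injective[OF holf _ openY dnz] by metis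
    then show "\<exists>R>0. ball x R \<subseteq> Y \<and> inj_on f (ball x R)" by blast
  qed
  then obtain R where R: "\<And>x. x \<in> F \<Longrightarrow> R x > 0 \<and> ball x (R x) \<subseteq> Y \<and> inj_on f (ball x (R x))"
    by metis
  have finF: "finite F"
  proof (rule ccontr)
    assume "infinite F"
    then obtain x where x: "x \<in> F" "x islimpt F"
      using Heine_Borel_imp_Bolzano_Weierstrass[OF cF] by blast
    then obtain x' where x': "x' \<in> F" "x' \<noteq> x" "dist x' x < R x"
      using R[OF x(1)] islimpt_approachable by blast
    have "f x' = f x" using x x' by (simp add: F_def)
    moreover have "x' \<in> ball x (R x)" "x \<in> ball x (R x)" using x' R[OF x(1)]
      by (auto simp: dist_commute)
    ultimately show False using R[OF x(1)] x' by (meson inj_onD)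
  qed
  define P where "P = {(a,b). a\<in>F \<and> b\<in>F \<and> a\<noteq>b}"
  have finP: "finite P"
    by (rule finite_subset[of P "F \<times> F"]) (auto simp: P_def finF)
  define sep where "sep = Min (insert 1 ((\<lambda>(a,b). dist a b) ` P))"
  have sep0: "sep > 0" unfolding sep_def using finP
    by (subst Min_gr_iff) (auto simp: P_def)
  have seple: "sep \<le> dist a b" if "a \<in> F" "b \<in> F" "a \<noteq> b" for a b
    unfolding sep_def using finP that by (intro Min_le) (auto simp: P_def)
  define r where "r x = min (R x) (sep/2)" for x
  define V where "V x = ball x (r x)" for x
  have rpos: "r x > 0" if "x \<in> F" for x using R[OF that] sep0 by (simp add: r_def)
  have VY: "V x \<subseteq> Y" if "x \<in> F" for x using R[OF that] unfolding V_def r_def by auto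
  have Vinj: "inj_on f (V x)" if "x \<in> F" for x
    using R[OF that] unfolding V_def r_def by (auto intro: inj_on_subset)
  have Vopen: "open (V x)" for x by (simp add: V_def)
  have xV: "x \<in> V x" if "x \<in> F" for x using rpos[OF that] by (simp add: V_def)
  have Vdisj: "V a \<inter> V b = {}" if "a \<in> F" "b \<in> F" "a \<noteq> b" for a b
  proof (rule ccontr)
    assume "V a \<inter> V b \<noteq> {}"
    then obtain z where "dist a z < r a" "dist b z < r b" by (auto simp: V_def)
    then have "dist a b < r a + r b" by (metis add_strict_mono dist_commute dist_triangle_lt)
    also have "\<dots> \<le> sep" by (simp add: r_def)
    finally show False using seple[OF that] by simp
  qed
  have fVopen: "open (f ` V x)" if "x \<in> F" for x
    using open_mapping_thm3[OF holomorphic_on_subset[OF holf VY[OF that]] Vopen Vinj[OF that]] .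
  define E where "E = Y - (\<Union>x\<in>F. V x)"
  have "closedin (top_of_set Y) E"
  proof -
    have "E = Y \<inter> (- (\<Union>x\<in>F. V x))" by (auto simp: E_def)
    moreover have "closed (- (\<Union>x\<in>F. V x))" using Vopen by (intro closed_Compl open_UN) auto
    ultimately show ?thesis by (simp add: closedin_closed_Int)
  qed
  then obtain C where C: "closed C" "f ` E = X \<inter> C"
    using clo closedin_closed by metis
  define T where "T = (X - C) \<inter> (\<Inter>x\<in>F. f ` V x)"
  have openT: "open T" unfolding T_def
    using openX C(1) finF fVopen by (intro open_Int open_Diff open_INT) auto
  have TX: "T \<subseteq> X" by (auto simp: T_def)
  have yT: "y \<in> T"
  proof -
    have "y \<notin> C"
    proof
      assume "y \<in> C"
      then have "y \<in> f ` E" using C y by blast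
      then obtain e where e: "e \<in> E" "f e = y" by blast
      then have "e \<in> F" by (auto simp: E_def F_def)
      then show False using e xV by (auto simp: E_def)
    qed
    moreover have "y \<in> f ` V x" if "x \<in> F" for x
      using xV[OF that] that by (auto simp: F_def)
    ultimately show ?thesis using y by (auto simp: T_def)
  qed
  show "\<exists>T. y \<in> T \<and> openin (top_of_set X) T \<and>
             (\<exists>v. \<Union>v = Y \<inter> f -` T \<and> (\<forall>u \<in> v. openin (top_of_set Y) u) \<and>
                  pairwise disjnt v \<and> (\<forall>u \<in> v. \<exists>q. homeomorphism u T f q))"
  proof (intro exI conjI)
    show "y \<in> T" by (rule yT)
    show "openin (top_of_set X) T" using openT TX by (simp add: open_subset)
    show "\<Union>((\<lambda>x. V x \<inter> f -` T) ` F) = Y \<inter> f -` T"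
    proof
      show "\<Union>((\<lambda>x. V x \<inter> f -` T) ` F) \<subseteq> Y \<inter> f -` T" using VY by blast
      show "Y \<inter> f -` T \<subseteq> \<Union>((\<lambda>x. V x \<inter> f -` T) ` F)"
      proof
        fix z assume z: "z \<in> Y \<inter> f -` T"
        have "z \<notin> E"
        proof
          assume "z \<in> E"
          then have "f z \<in> C" using C by blast
          then show False using z by (auto simp: T_def)
        qed
        then show "z \<in> \<Union>((\<lambda>x. V x \<inter> f -` T) ` F)" using z by (auto simp: E_def)
      qed
    qed
    show "\<forall>u\<in>(\<lambda>x. V x \<inter> f -` T) ` F. openin (top_of_set Y) u"
    proof
      fix u assume "u \<in> (\<lambda>x. V x \<inter> f -` T) ` F"
      then obtain x where x: "x \<in> F" "u = V x \<inter> f -` T" by blast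
      have "open u" unfolding x(2)
        by (rule continuous_open_preimage[OF continuous_on_subset[OF contf VY[OF x(1)]] Vopen openT])
      then show "openin (top_of_set Y) u" using VY[OF x(1)] x(2) by (auto intro: open_subset)
    qed
    show "pairwise disjnt ((\<lambda>x. V x \<inter> f -` T) ` F)"
      unfolding pairwise_def disjnt_def using Vdisj by blast
    show "\<forall>u\<in>(\<lambda>x. V x \<inter> f -` T) ` F. \<exists>q. homeomorphism u T f q"
    proof
      fix u assume "u \<in> (\<lambda>x. V x \<inter> f -` T) ` F"
      then obtain x where x: "x \<in> F" "u = V x \<inter> f -` T" by blast
      have uV: "u \<subseteq> V x" using x by blast
      have openu: "open u" unfolding x(2)
        by (rule continuous_open_preimage[OF continuous_on_subset[OF contf VY[OF x(1)]] Vopen openT])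
      have fu: "f ` u = T"
      proof
        show "f ` u \<subseteq> T" using x by blast
        show "T \<subseteq> f ` u"
        proof
          fix t assume "t \<in> T"
          then have "t \<in> f ` V x" using x by (auto simp: T_def)
          then obtain z where "z \<in> V x" "t = f z" by blast
          then show "t \<in> f ` u" using \<open>t \<in> T\<close> x by blast
        qed
      qed
      obtain q where "homeomorphism u T f q"
      proof (rule homeomorphism_injective_open_map)
        show "continuous_on u f" using contf VY[OF x(1)] uV by (meson continuous_on_subset order_trans)
        show "f ` u = T" by (rule fu)
        show "inj_on f u" using Vinj[OF x(1)] uV by (rule inj_on_subset)
        fix B assume B: "openin (top_of_set u) B"
        then have "open B" using openu openin_open_trans by blast
        moreover have "B \<subseteq> u" using B openin_imp_subset by blast
        ultimately have "open (f ` B)"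
          using open_mapping_thm3 holomorphic_on_subset[OF holf] VY[OF x(1)] uV
            inj_on_subset[OF Vinj[OF x(1)]] by (meson order_trans)
        then show "openin (top_of_set T) (f ` B)"
          using \<open>B \<subseteq> u\<close> fu by (auto intro: open_subset)
      qed
      then show "\<exists>q. homeomorphism u T f q" by blast
    qed
  qed
qed



lemma compact_in_ball_radius:
  fixes Q :: "complex set"
  assumes "compact Q" "Q \<subseteq> ball 0 1"
  obtains r where "0 < r" "r < 1" "Q \<subseteq> ball 0 r"
proof (cases "Q = {}")
  case True then show ?thesis using that[of "1/2"] by auto
next
  case False
  obtain x where x: "x \<in> Q" "\<And>y. y \<in> Q \<Longrightarrow> norm y \<le> norm x"
    using continuous_attains_sup[OF assms(1) False continuous_on_norm_id] by auto
  have "norm x < 1" using x assms(2) by auto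
  show ?thesis
  proof (rule that[of "max (1/2) ((norm x + 1)/2)"])
    show "Q \<subseteq> ball 0 (max (1/2) ((norm x + 1)/2))"
      using x \<open>norm x < 1\<close> by (force simp: dist_norm)
  qed (use \<open>norm x < 1\<close> in \<open>auto intro: add_nonneg_pos\<close>)
qed

lemma retract_lemma:
  fixes W J S :: "complex set"
  assumes W: "open W" "\<exists>h. h holomorphic_on W \<and> bij_betw h W (ball 0 1)"
    and JW: "compact (J \<inter> W)" and cS: "compact S" and SW: "S \<subseteq> W - J"
  obtains \<rho> where "continuous_on UNIV \<rho>" "\<And>z. \<rho> z \<in> W" "\<And>z. z \<notin> J \<Longrightarrow> \<rho> z \<notin> J"
    "\<And>z. z \<in> S \<Longrightarrow> \<rho> z = z"
proof -
  obtain \<psi> where hol\<psi>: "\<psi> holomorphic_on W" and bij: "bij_betw \<psi> W (ball 0 1)" using W by blast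
  have inj\<psi>: "inj_on \<psi> W" and im\<psi>: "\<psi> ` W = ball 0 1" using bij by (auto simp: bij_betw_def)
  obtain \<psi>i where hol\<psi>i: "\<psi>i holomorphic_on (\<psi> ` W)" and inv1: "\<And>z. z \<in> W \<Longrightarrow> \<psi>i (\<psi> z) = z"
    using holomorphic_has_inverse[OF hol\<psi> W(1) inj\<psi>] by metis
  have inv2: "\<psi>i v \<in> W \<and> \<psi> (\<psi>i v) = v" if "v \<in> ball 0 1" for v
    using that im\<psi> inv1 by force
  have cont\<psi>: "continuous_on W \<psi>" by (simp add: hol\<psi> holomorphic_on_imp_continuous_on)
  have cont\<psi>i: "continuous_on (ball 0 1) \<psi>i"
    using hol\<psi>i im\<psi> holomorphic_on_imp_continuous_on by metis
  define Q where "Q = \<psi> ` ((J \<inter> W) \<union> S)"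
  have cQ: "compact Q" unfolding Q_def
    using JW cS SW by (intro compact_continuous_image continuous_on_subset[OF cont\<psi>] compact_Un) auto
  have QB: "Q \<subseteq> ball 0 1" unfolding Q_def using im\<psi> SW by blast
  obtain r where r: "0 < r" "r < 1" "Q \<subseteq> ball 0 r" using compact_in_ball_radius[OF cQ QB] by blast
  define z0 where "z0 = \<psi>i 0"
  have z0: "z0 \<in> W" "\<psi> z0 = 0" using inv2[of 0] by (auto simp: z0_def)
  define q where "q z = (if z = z0 then deriv \<psi> z0 else (\<psi> z - \<psi> z0)/(z - z0))" for z
  have holq: "q holomorphic_on W" unfolding q_def by (rule pole_lemma_open[OF hol\<psi> W(1)])
  have qnz: "q z \<noteq> 0" if "z \<in> W" for z
  proof (cases "z = z0")
    case True then show ?thesis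
      using holomorphic_injective_imp_regular[OF hol\<psi> W(1) inj\<psi> z0(1)] by (simp add: q_def)
  next
    case False
    then have "\<psi> z \<noteq> \<psi> z0" using inj\<psi> that z0(1) by (meson inj_onD)
    then show ?thesis using False by (simp add: q_def)
  qed
  have hom: "homeomorphism W (ball 0 1) \<psi> \<psi>i"
    unfolding homeomorphism_def
  proof (intro conjI ballI)
    show "\<psi>i ` ball 0 1 = W"
    proof
      show "\<psi>i ` ball 0 1 \<subseteq> W" using inv2 by blast
      show "W \<subseteq> \<psi>i ` ball 0 1"
      proof
        fix z assume "z \<in> W"
        then have "\<psi> z \<in> ball 0 1" "\<psi>i (\<psi> z) = z" using im\<psi> inv1 by auto
        then show "z \<in> \<psi>i ` ball 0 1" by (metis image_eqI)
      qed
    qed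
  qed (use cont\<psi> cont\<psi>i im\<psi> inv1 inv2 in auto)
  have scW: "simply_connected W"
    using homeomorphic_simply_connected_eq[of W "ball (0::complex) 1"] hom
      convex_imp_simply_connected[OF convex_ball]
    by (metis homeomorphic_def)
  obtain L where contL: "continuous_on W L" and L: "\<And>z. z \<in> W \<Longrightarrow> q z = exp (L z)"
    using continuous_logarithm_on_simply_connected[OF holomorphic_on_imp_continuous_on[OF holq] scW
        open_imp_locally_path_connected[OF W(1)] qnz] by metis
  define Sr where "Sr = \<psi>i ` sphere 0 r"
  have SrW: "Sr \<subseteq> W" using inv2 r by (auto simp: Sr_def)
  have cSr: "compact Sr" unfolding Sr_def
    using r by (intro compact_continuous_image continuous_on_subset[OF cont\<psi>i]) auto
  have "continuous_on Sr (\<lambda>z. Im (L z))"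
    using continuous_on_subset[OF contL SrW] by (intro continuous_intros)
  then obtain \<theta> where cont\<theta>: "continuous_on UNIV \<theta>" and \<theta>: "\<And>z. z \<in> Sr \<Longrightarrow> \<theta> z = Im (L z)"
    using Tietze_unbounded[of Sr "\<lambda>z. Im (L z)" UNIV] cSr by (auto simp: compact_imp_closed)
  define e where "e z = (z - z0) / complex_of_real (cmod (z - z0))" for z
  define \<rho> where "\<rho> z = (if z \<in> W \<and> cmod (\<psi> z) \<le> r then z
        else \<psi>i (complex_of_real r * e z * exp (\<i> * complex_of_real (\<theta> z))))" for z
  define C where "C = {z \<in> W. cmod (\<psi> z) \<le> r}"
  define E where "E = - {z \<in> W. cmod (\<psi> z) < r}"
  have CE: "C \<union> E = UNIV" by (auto simp: C_def E_def)
  have Ceq: "C = \<psi>i ` cball 0 r"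
  proof
    show "C \<subseteq> \<psi>i ` cball 0 r"
    proof
      fix z assume "z \<in> C"
      then have "z \<in> W" "\<psi> z \<in> cball 0 r" by (auto simp: C_def)
      then show "z \<in> \<psi>i ` cball 0 r" using inv1 by (metis image_eqI)
    qed
    show "\<psi>i ` cball 0 r \<subseteq> C"
    proof
      fix z assume "z \<in> \<psi>i ` cball 0 r"
      then obtain v where v: "v \<in> cball 0 r" "z = \<psi>i v" by blast
      then have "v \<in> ball 0 1" using r by auto
      then show "z \<in> C" using inv2 v by (auto simp: C_def)
    qed
  qed
  have closedC: "closed C" unfolding Ceq
    using r by (intro compact_imp_closed compact_continuous_image continuous_on_subset[OF cont\<psi>i]) auto
  have closedE: "closed E"
  proof -
    have "{z \<in> W. cmod (\<psi> z) < r} = W \<inter> \<psi> -` ball 0 r" by auto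
    moreover have "open (W \<inter> \<psi> -` ball 0 r)"
      by (rule continuous_open_preimage[OF cont\<psi> W(1)]) auto
    ultimately have "E = - (W \<inter> \<psi> -` ball 0 r)" by (simp add: E_def)
    then show ?thesis using \<open>open (W \<inter> \<psi> -` ball 0 r)\<close> closed_Compl by metis
  qed
  have z0E: "z0 \<notin> E" using z0 r by (simp add: E_def)
  have arg_ball: "complex_of_real r * e z * exp (\<i> * complex_of_real (\<theta> z)) \<in> sphere 0 r" if "z \<noteq> z0" for z
    using that r by (simp add: e_def norm_mult norm_divide)
  have cont\<rho>: "continuous_on UNIV \<rho>"
    unfolding \<rho>_def CE[symmetric]
  proof (rule continuous_on_cases_local)
    show "closedin (top_of_set (C \<union> E)) C" using closedC by (simp add: closed_subset)
    show "closedin (top_of_set (C \<union> E)) E" using closedE by (simp add: closed_subset)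
    show "continuous_on C (\<lambda>x. x)" by (rule continuous_on_id)
    have "continuous_on E (\<lambda>z. complex_of_real r * e z * exp (\<i> * complex_of_real (\<theta> z)))"
      unfolding e_def using z0E
      by (intro continuous_intros continuous_on_subset[OF cont\<theta>]) auto
    then show "continuous_on E (\<lambda>z. \<psi>i (complex_of_real r * e z * exp (\<i> * complex_of_real (\<theta> z))))"
      apply (rule continuous_on_compose2[OF cont\<psi>i])
      using arg_ball z0E r by fastforce
    fix x assume x: "x \<in> C \<and> \<not> (x \<in> W \<and> cmod (\<psi> x) \<le> r) \<or> x \<in> E \<and> (x \<in> W \<and> cmod (\<psi> x) \<le> r)"
    then have xW: "x \<in> W" and nx: "cmod (\<psi> x) = r" by (auto simp: C_def E_def)
    have xz0: "x \<noteq> z0" using nx z0 r by auto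
    have xSr: "x \<in> Sr" unfolding Sr_def using inv1[OF xW] nx by (metis image_eqI mem_sphere_0)
    have psx: "\<psi> x = (x - z0) * exp (L x)"
      using L[OF xW] xz0 z0 by (simp add: q_def field_simps)
    have nr: "cmod (x - z0) * exp (Re (L x)) = r" using nx psx by (simp add: norm_mult)
    have "complex_of_real r * e x * exp (\<i> * complex_of_real (\<theta> x))
          = complex_of_real (cmod (x - z0) * exp (Re (L x))) * ((x - z0) / complex_of_real (cmod (x - z0)))
             * exp (\<i> * complex_of_real (Im (L x)))"
      using nr \<theta>[OF xSr] by (simp add: e_def)
    also have "\<dots> = (x - z0) * (complex_of_real (exp (Re (L x))) * cis (Im (L x)))"
      using xz0 by (simp add: cis_conv_exp field_simps)
    also have "\<dots> = \<psi> x" using psx by (simp add: exp_eq_polar)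
    finally show "x = \<psi>i (complex_of_real r * e x * exp (\<i> * complex_of_real (\<theta> x)))"
      using inv1[OF xW] by simp
  qed
  show ?thesis
  proof (rule that[OF cont\<rho>])
    fix z
    show "\<rho> z \<in> W"
    proof (cases "z \<in> W \<and> cmod (\<psi> z) \<le> r")
      case False
      then have "z \<noteq> z0" using z0 r by auto
      then show ?thesis using False arg_ball[of z] inv2 r by (simp add: \<rho>_def)
    qed (simp add: \<rho>_def)
    show "\<rho> z \<notin> J" if "z \<notin> J"
    proof (cases "z \<in> W \<and> cmod (\<psi> z) \<le> r")
      case False
      then have zz: "z \<noteq> z0" using z0 r by auto
      define v where "v = complex_of_real r * e z * exp (\<i> * complex_of_real (\<theta> z))"
      have v: "cmod v = r" using arg_ball[OF zz] by (simp add: v_def)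
      then have vb: "v \<in> ball 0 1" using r by simp
      have "\<psi>i v \<notin> J"
      proof
        assume "\<psi>i v \<in> J"
        then have "\<psi> (\<psi>i v) \<in> Q" unfolding Q_def using inv2[OF vb] by blast
        then show False using r(3) inv2[OF vb] v by auto
      qed
      then show ?thesis using False by (auto simp: \<rho>_def v_def)
    qed (simp add: \<rho>_def that)
    show "\<rho> z = z" if "z \<in> S"
    proof -
      have "\<psi> z \<in> Q" using that by (simp add: Q_def)
      then have "cmod (\<psi> z) \<le> r" using r(3) by auto
      then show ?thesis using that SW by (auto simp: \<rho>_def)
    qed
  qed
qed



lemma connected_in_one:
  fixes A :: "nat \<Rightarrow> complex set"
  assumes "connected S" "S \<subseteq> (\<Union>i<N. A i)" "\<forall>i<N. open (A i)"
    "\<forall>i<N. \<forall>j<N. i \<noteq> j \<longrightarrow> A i \<inter> A j = {}" "k < N" "x \<in> S" "x \<in> A k"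
  shows "S \<subseteq> A k"
proof -
  define B where "B = (\<Union>j\<in>{j. j<N \<and> j \<noteq> k}. A j)"
  have "open B" using assms(3) by (auto simp: B_def)
  have "S \<subseteq> A k \<union> B" using assms(2) by (auto simp: B_def)
  have "A k \<inter> B = {}" using assms(4,5) by (auto simp: B_def)
  have "B \<inter> S = {}"
    using assms(1) \<open>open B\<close> assms(3,5,6,7) \<open>S \<subseteq> A k \<union> B\<close> \<open>A k \<inter> B = {}\<close>
    unfolding connected_def by blast
  then show ?thesis using \<open>S \<subseteq> A k \<union> B\<close> by blast
qed

theorem mainTheorem2:
  fixes U :: "complex set" and Ui :: "nat \<Rightarrow> complex set" and N :: nat
    and f :: "complex \<Rightarrow> complex" and d :: nat
    and w :: complex and ws :: "nat \<Rightarrow> complex" and \<phi> :: "complex \<Rightarrow> complex"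
  defines "U' \<equiv> (\<Union>i<N. Ui i)"
  assumes U_disc: "conformal_disc U"
    and Ui_disc: "\<forall>i<N. conformal_disc (Ui i)"
    and Ui_disj: "\<forall>i<N. \<forall>j<N. i \<noteq> j \<longrightarrow> Ui i \<inter> Ui j = {}"
    and relcpt: "compact (closure U') \<and> closure U' \<subseteq> U"
    and f_holo: "f holomorphic_on U'"
    and f_maps: "f ` U' \<subseteq> U"
    and f_proper: "proper_map (top_of_set U') (top_of_set U) f"
    and f_deg: "\<exists>ds::nat \<Rightarrow> nat. (\<forall>i<N. holo_degree f (Ui i) U (ds i)) \<and> d = (\<Sum>i<N. ds i)"
    and d_gt: "d > 1"
    and KJ: "filled_julia f U' = julia f U'"
    and cantor: "cantor_set (julia f U')"
    and crit: "\<forall>z\<in>U'. deriv f z = 0 \<longrightarrow> z \<in> filled_julia f U'"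
    and w_in: "w \<in> U - U'"
    and ws_inj: "inj_on ws {..<d}"
    and ws_pre: "ws ` {..<d} = {z \<in> U'. f z = w}"
    and phi_holo: "\<phi> holomorphic_on ball 0 1"
    and phi_cov: "covering_space (ball 0 1) \<phi> (U - julia f U')"
    and phi0: "\<phi> 0 = w"
  shows "\<exists>g :: nat \<Rightarrow> complex \<Rightarrow> complex.
     (\<forall>i<d. g i holomorphic_on ball 0 1 \<and> inj_on (g i) (ball 0 1)
        \<and> g i ` ball 0 1 \<subseteq> ball 0 1
        \<and> (\<forall>z\<in>ball 0 1. \<phi> (g i z) \<in> U' \<and> f (\<phi> (g i z)) = \<phi> z)
        \<and> \<phi> (g i 0) = ws i)
   \<and> (\<forall>z\<in>ball 0 1. \<forall>j<d. \<forall>j'<d. j \<noteq> j' \<longrightarrow> \<phi> (g j z) \<noteq> \<phi> (g j' z))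
   \<and> (\<forall>z\<in>ball 0 1. (\<lambda>j. \<phi> (g j z)) ` {..<d} = {y \<in> U'. f y = \<phi> z})
   \<and> {z \<in> U'. f z \<in> U - julia f U'} = U' - julia f U'
   \<and> U' - julia f U' = (\<Union>i<d. \<phi> ` (g i ` ball 0 1))"
proof -
  define J where "J = julia f U'"
  define X where "X = U - J"
  define Y where "Y = U' - J"
  define D where "D = ball (0::complex) 1"
  have openU: "open U" and connU: "connected U" using U_disc by (auto simp: conformal_disc_def)
  have openUi: "\<And>i. i < N \<Longrightarrow> open (Ui i)" using Ui_disc by (auto simp: conformal_disc_def)
  have openU': "open U'" unfolding U'_def using openUi by auto
  have U'U: "U' \<subseteq> U" using relcpt closure_subset by blast
  have KJ': "filled_julia f U' = J" using KJ by (simp add: J_def)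
  have cJ: "compact J" using cantor by (simp add: cantor_set_def J_def)
  have Jne: "J \<noteq> {}" using cantor by (simp add: cantor_set_def J_def)
  have JU': "J \<subseteq> U'" using KJ' by (auto simp: filled_julia_def)
  have backJ: "z \<in> J" if "z \<in> U'" "f z \<in> J" for z
  proof -
    have "f z \<in> filled_julia f U'" using that KJ' by simp
    then have h: "\<forall>n. (f ^^ n) (f z) \<in> U'" by (simp add: filled_julia_def)
    have "(f ^^ n) z \<in> U'" for n
    proof (cases n)
      case 0 then show ?thesis using that by simp
    next
      case (Suc m) then show ?thesis using h by (simp add: funpow_Suc_right del: funpow.simps)
    qed
    then show ?thesis using that KJ'[symmetric] by (simp add: filled_julia_def)
  qed
  have fwd: "f z \<in> J" if "z \<in> J" for z
  proof -
    have h: "\<forall>n. (f ^^ n) z \<in> U'" using that KJ'[symmetric] by (simp add: filled_julia_def)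
    have "(f ^^ n) (f z) \<in> U'" for n
      using h[rule_format, of "Suc n"] by (simp add: funpow_Suc_right del: funpow.simps)
    moreover have "f z \<in> U'" using h[rule_format, of 1] by simp
    ultimately show ?thesis using KJ'[symmetric] by (simp add: filled_julia_def)
  qed
  have intJ: "interior J = {}"
  proof -
    have "J = frontier J" using KJ' by (simp add: J_def julia_def)
    then show ?thesis using interior_subset[of J] by (auto simp: frontier_def)
  qed
  have dnz: "deriv f z \<noteq> 0" if "z \<in> Y" for z
    using crit that KJ' by (auto simp: Y_def)
  have openX: "open X" unfolding X_def using openU cJ by (simp add: compact_imp_closed open_Diff)
  have openY: "open Y" unfolding Y_def using openU' cJ by (simp add: compact_imp_closed open_Diff)
  have YX: "Y \<subseteq> X" using U'U by (auto simp: X_def Y_def)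
  have fYX: "f z \<in> X" if "z \<in> Y" for z using that f_maps backJ by (auto simp: X_def Y_def)
  have holfY: "f holomorphic_on Y" using f_holo by (rule holomorphic_on_subset) (auto simp: Y_def)
  have closed_Uk: "closedin (top_of_set U') (Ui k)" if "k < N" for k
  proof -
    have "Ui k = U' \<inter> (- (\<Union>j\<in>{j. j<N \<and> j \<noteq> k}. Ui j))"
      using Ui_disj that by (auto simp: U'_def)
    moreover have "closed (- (\<Union>j\<in>{j. j<N \<and> j \<noteq> k}. Ui j))" using openUi by auto
    ultimately show ?thesis by (metis closedin_closed_Int)
  qed
  have surjU: "U \<subseteq> f ` U'"
  proof -
    obtain x0 where "x0 \<in> J" using Jne by blast
    then obtain k where k: "k < N" "x0 \<in> Ui k" using JU' by (auto simp: U'_def)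
    have Uk: "Ui k \<subseteq> U'" using k by (auto simp: U'_def)
    have connk: "connected (Ui k)" using Ui_disc k by (auto simp: conformal_disc_def)
    have nc: "\<not> f constant_on Ui k"
    proof
      assume "f constant_on Ui k"
      then obtain c where c: "\<And>z. z \<in> Ui k \<Longrightarrow> f z = c" by (auto simp: constant_on_def)
      have "Ui k \<subseteq> J"
      proof
        fix z assume z: "z \<in> Ui k"
        have "((\<lambda>_. c) has_field_derivative 0) (at z)" by simp
        then have "(f has_field_derivative 0) (at z)"
          by (rule has_field_derivative_transform_within_open[OF _ openUi[OF k(1)] z]) (simp add: c)
        then have "deriv f z = 0" by (rule DERIV_imp_deriv)
        then show "z \<in> J" using crit z Uk KJ' by auto
      qed
      then have "Ui k \<subseteq> interior J" using openUi[OF k(1)] by (simp add: interior_maximal)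
      then show False using intJ k by blast
    qed
    have "open (f ` Ui k)"
      by (rule open_mapping_thm[OF holomorphic_on_subset[OF f_holo Uk] openUi[OF k(1)] connk
            openUi[OF k(1)] order_refl nc])
    moreover have "f ` Ui k \<subseteq> U" using f_maps Uk by blast
    ultimately have "openin (top_of_set U) (f ` Ui k)" by (simp add: open_subset)
    moreover have "closedin (top_of_set U) (f ` Ui k)"
      using proper_imp_closed_map[OF f_proper] closed_Uk[OF k(1)] by (simp add: closed_map_def)
    moreover have "f ` Ui k \<noteq> {}" using k by blast
    ultimately have "f ` Ui k = U" using connU by (meson connected_clopen)
    then show ?thesis using Uk by blast
  qed
  have surj: "f ` Y = X"
  proof
    show "f ` Y \<subseteq> X" using fYX by blast
    show "X \<subseteq> f ` Y"
    proof
      fix y assume y: "y \<in> X"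
      then obtain x where "x \<in> U'" "f x = y" using surjU by (auto simp: X_def)
      moreover then have "x \<notin> J" using fwd y by (auto simp: X_def)
      ultimately show "y \<in> f ` Y" by (auto simp: Y_def)
    qed
  qed
  have fib: "compact {x\<in>Y. f x = y}" if y: "y \<in> X" for y
  proof -
    have "{x\<in>Y. f x = y} = {x \<in> topspace (top_of_set U'). f x = y}"
      using fwd y by (auto simp: X_def Y_def)
    moreover have "compactin (top_of_set U') {x \<in> topspace (top_of_set U'). f x = y}"
      using f_proper y by (auto simp: proper_map_def X_def)
    ultimately show ?thesis by (simp add: compactin_subtopology)
  qed
  have clo: "closedin (top_of_set X) (f ` E)" if E: "closedin (top_of_set Y) E" for E
  proof -
    obtain C where C: "closed C" "E = Y \<inter> C" using E closedin_closed by metis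
    have "closedin (top_of_set U') (U' \<inter> C)" using C(1) by (simp add: closedin_closed_Int)
    then have "closedin (top_of_set U) (f ` (U' \<inter> C))"
      using proper_imp_closed_map[OF f_proper] by (simp add: closed_map_def)
    then obtain C' where C': "closed C'" "f ` (U' \<inter> C) = U \<inter> C'" using closedin_closed by metis
    have "f ` E = X \<inter> C'"
    proof
      show "f ` E \<subseteq> X \<inter> C'"
      proof
        fix y assume "y \<in> f ` E"
        then obtain e where e: "e \<in> E" "y = f e" by blast
        then have "y \<in> X" using fYX C by auto
        moreover have "y \<in> f ` (U' \<inter> C)" using e C by (auto simp: Y_def)
        ultimately show "y \<in> X \<inter> C'" using C' by blast
      qed
      show "X \<inter> C' \<subseteq> f ` E"
      proof
        fix y assume y: "y \<in> X \<inter> C'"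
        then have "y \<in> f ` (U' \<inter> C)" using C' by (auto simp: X_def)
        then obtain x where x: "x \<in> U'" "x \<in> C" "y = f x" by blast
        then have "x \<notin> J" using fwd y by (auto simp: X_def)
        then show "y \<in> f ` E" using x C by (auto simp: Y_def)
      qed
    qed
    then show ?thesis using C'(1) by (simp add: closedin_closed_Int)
  qed
  have covf: "covering_space Y f X"
    by (rule proper_local_covering[OF openY openX holfY dnz surj fib clo])
  have covphi: "covering_space D \<phi> X" using phi_cov by (simp add: D_def X_def J_def)
  have phiD: "\<phi> ` D = X" using covering_space_imp_surjective[OF covphi] .
  have contphi: "continuous_on D \<phi>" using covering_space_imp_continuous[OF covphi] .
  have scD: "simply_connected D" by (simp add: D_def convex_imp_simply_connected)
  have lpcD: "locally path_connected D" by (simp add: D_def open_imp_locally_path_connected)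
  have D0: "0 \<in> D" by (simp add: D_def)
  have segD: "closed_segment x y \<subseteq> D" if "x \<in> D" "y \<in> D" for x y
    using that convex_ball[of "0::complex" 1] unfolding D_def convex_contains_segment by blast
  have wJ: "w \<notin> J" using w_in JU' by auto
  have wsY: "ws i \<in> Y" "f (ws i) = w" if "i < d" for i
  proof -
    have "ws i \<in> {z \<in> U'. f z = w}" using ws_pre that by blast
    then show "ws i \<in> Y" "f (ws i) = w" using wJ fwd by (auto simp: Y_def)
  qed
  have "\<exists>g. g holomorphic_on D \<and> g ` D \<subseteq> D \<and> (\<forall>z\<in>D. \<phi> (g z) \<in> Y \<and> f (\<phi> (g z)) = \<phi> z)
            \<and> \<phi> (g 0) = ws i" if i: "i < d" for i
  proof -
    obtain h where conth: "continuous_on D h" and hY: "h \<in> D \<rightarrow> Y" and h0: "h 0 = ws i"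
      and fh: "\<And>y. y \<in> D \<Longrightarrow> f (h y) = \<phi> y"
      using covering_space_lift_strong[OF covf wsY(1)[OF i] D0 scD lpcD contphi _ ] phiD wsY(2)[OF i] phi0
      by (metis image_subset_iff_funcset order_refl)
    have holh: "h holomorphic_on D"
      by (rule covering_space_lift_is_holomorphic[OF covf openY holfY _ _ hY conth])
         (use phi_holo phiD fh in \<open>auto simp: D_def\<close>)
    obtain a where a: "a \<in> D" "\<phi> a = ws i" using phiD wsY(1)[OF i] YX by (metis imageE subsetD)
    have hX: "h \<in> D \<rightarrow> X" using hY YX by auto
    obtain g where contg: "continuous_on D g" and gD: "g \<in> D \<rightarrow> D" and g0: "g 0 = a"
      and pg: "\<And>y. y \<in> D \<Longrightarrow> \<phi> (g y) = h y"
      using covering_space_lift_strong[OF covphi a(1) D0 scD lpcD conth hX] a h0 by metis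
    have holg: "g holomorphic_on D"
      by (rule covering_space_lift_is_holomorphic[OF covphi _ _ holh hX gD contg])
         (use phi_holo pg in \<open>auto simp: D_def\<close>)
    show ?thesis
      using holg gD pg hY fh g0 a h0 by (intro exI[of _ g]) auto
  qed
  then obtain g where g: "\<And>i. i < d \<Longrightarrow> g i holomorphic_on D \<and> g i ` D \<subseteq> D
      \<and> (\<forall>z\<in>D. \<phi> (g i z) \<in> Y \<and> f (\<phi> (g i z)) = \<phi> z) \<and> \<phi> (g i 0) = ws i"
    by metis
  have gD: "g i z \<in> D" if "i < d" "z \<in> D" for i z using g[OF that(1)] that(2) by blast
  have gY: "\<phi> (g i z) \<in> Y" and gf: "f (\<phi> (g i z)) = \<phi> z" if "i < d" "z \<in> D" for i z
    using g[OF that(1)] that(2) by blast+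
  have g0: "\<phi> (g i 0) = ws i" if "i < d" for i using g[OF that] by blast
  have holg: "g i holomorphic_on D" if "i < d" for i using g[OF that] by blast
  have contg: "continuous_on D (g i)" if "i < d" for i
    using holg[OF that] holomorphic_on_imp_continuous_on by blast
  have contpg: "continuous_on D (\<lambda>z. \<phi> (g i z))" if "i < d" for i
    by (rule continuous_on_compose2[OF contphi contg[OF that]]) (use gD that in auto)
  have phiDX: "\<phi> \<in> D \<rightarrow> X" using phiD by blast
  have connD: "connected D" by (simp add: D_def)
  have distinct: "\<phi> (g j z) \<noteq> \<phi> (g j' z)" if "z \<in> D" "j < d" "j' < d" "j \<noteq> j'" for z j j'
  proof
    assume eq: "\<phi> (g j z) = \<phi> (g j' z)"
    have "\<phi> (g j 0) = \<phi> (g j' 0)"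
    proof (rule covering_space_lift_unique[OF covf eq contphi phiDX contpg[OF that(2)] _ _
            contpg[OF that(3)] _ _ connD that(1) D0])
      show "(\<lambda>z. \<phi> (g j z)) \<in> D \<rightarrow> Y" using gY that by auto
      show "(\<lambda>z. \<phi> (g j' z)) \<in> D \<rightarrow> Y" using gY that by auto
      show "\<And>x. x \<in> D \<Longrightarrow> \<phi> x = f (\<phi> (g j x))" using gf that by auto
      show "\<And>x. x \<in> D \<Longrightarrow> \<phi> x = f (\<phi> (g j' x))" using gf that by auto
    qed
    then have "ws j = ws j'" using g0 that by simp
    then show False using ws_inj that by (auto dest: inj_onD)
  qed
  have fiber: "(\<lambda>j. \<phi> (g j z)) ` {..<d} = {y \<in> U'. f y = \<phi> z}" if z: "z \<in> D" for z
  proof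
    show "(\<lambda>j. \<phi> (g j z)) ` {..<d} \<subseteq> {y \<in> U'. f y = \<phi> z}"
      using gY gf z by (auto simp: Y_def)
    show "{y \<in> U'. f y = \<phi> z} \<subseteq> (\<lambda>j. \<phi> (g j z)) ` {..<d}"
    proof
      fix y assume y: "y \<in> {y \<in> U'. f y = \<phi> z}"
      have "\<phi> z \<in> X" using phiD z by blast
      then have yY: "y \<in> Y" using y fwd[of y] by (auto simp: X_def Y_def)
      define p where "p = linepath z 0"
      have pD: "p t \<in> D" if "t \<in> {0..1}" for t
      proof -
        have "p t \<in> closed_segment z 0" using that by (auto simp: p_def closed_segment_def linepath_def)
        moreover have "closed_segment z 0 \<subseteq> D" using z D0 by (rule segD)
        ultimately show ?thesis by blast
      qed
      have pathp: "path p" by (simp add: p_def)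
      have contpp: "continuous_on {0..1} p" using pathp by (simp add: path_def)
      have path_php: "path (\<phi> \<circ> p)"
        unfolding path_def by (rule continuous_on_compose[OF contpp continuous_on_subset[OF contphi]])
          (use pD in auto)
      have pimg: "path_image (\<phi> \<circ> p) \<subseteq> X" using pD phiD by (auto simp: path_image_def)
      have pst: "pathstart (\<phi> \<circ> p) = f y" using y by (simp add: p_def pathstart_def linepath_def)
      obtain q where q: "path q" "path_image q \<subseteq> Y" "pathstart q = y"
        and fq: "\<And>t. t \<in> {0..1} \<Longrightarrow> f (q t) = (\<phi> \<circ> p) t"
        using covering_space_lift_path_strong[OF covf yY path_php pimg pst] by metis
      have q1Y: "q 1 \<in> Y" using q(2) by (auto simp: path_image_def)
      have "f (q 1) = w" using fq[of 1] phi0 by (simp add: p_def linepath_def)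
      then have "q 1 \<in> ws ` {..<d}" using q1Y ws_pre by (auto simp: Y_def)
      then obtain j where j: "j < d" "q 1 = ws j" by blast
      have cq: "continuous_on {0..1} q" using q(1) by (simp add: path_def)
      have cphp: "continuous_on {0..1} (\<phi> \<circ> p)" using path_php by (simp add: path_def)
      have cg2: "continuous_on {0..1} (\<lambda>t. \<phi> (g j (p t)))"
        by (rule continuous_on_compose2[OF contpg[OF j(1)] contpp]) (use pD in auto)
      have "q 0 = \<phi> (g j (p 0))"
      proof (rule covering_space_lift_unique[OF covf _ cphp _ cq _ _ cg2, of 1 0])
        show "q 1 = \<phi> (g j (p 1))" using j g0 by (simp add: p_def linepath_def)
        show "\<phi> \<circ> p \<in> {0..1} \<rightarrow> X" using pimg by (auto simp: path_image_def)
        show "q \<in> {0..1} \<rightarrow> Y" using q(2) by (auto simp: path_image_def)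
        show "\<And>x. x \<in> {0..1} \<Longrightarrow> (\<phi> \<circ> p) x = f (q x)" using fq by simp
        show "(\<lambda>t. \<phi> (g j (p t))) \<in> {0..1} \<rightarrow> Y" using gY[OF j(1)] pD by auto
        show "\<And>x. x \<in> {0..1} \<Longrightarrow> (\<phi> \<circ> p) x = f (\<phi> (g j (p x)))" using gf[OF j(1)] pD by auto
      qed auto
      then have "y = \<phi> (g j z)" using q(3) by (simp add: p_def linepath_def pathstart_def)
      then show "y \<in> (\<lambda>j. \<phi> (g j z)) ` {..<d}" using j by auto
    qed
  qed
  have injg: "inj_on (g i) D" if i: "i < d" for i
  proof
    fix a b assume a: "a \<in> D" and b: "b \<in> D" and gab: "g i a = g i b"
    define \<gamma> where "\<gamma> = linepath a b"
    have \<gamma>D: "\<gamma> t \<in> D" if "t \<in> {0..1}" for t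
    proof -
      have "\<gamma> t \<in> closed_segment a b" using that by (auto simp: \<gamma>_def closed_segment_def linepath_def)
      moreover have "closed_segment a b \<subseteq> D" using a b by (rule segD)
      ultimately show ?thesis by blast
    qed
    have path\<gamma>: "path \<gamma>" by (simp add: \<gamma>_def)
    have pi\<gamma>: "path_image \<gamma> \<subseteq> D" using \<gamma>D by (auto simp: path_image_def)
    define \<sigma> where "\<sigma> = g i \<circ> \<gamma>"
    have path\<sigma>: "path \<sigma>" unfolding \<sigma>_def
      by (rule path_continuous_image[OF path\<gamma> continuous_on_subset[OF contg[OF i] pi\<gamma>]])
    have pi\<sigma>: "path_image \<sigma> \<subseteq> D" using gD[OF i] pi\<gamma> by (auto simp: \<sigma>_def path_image_compose)
    have closed\<sigma>: "pathfinish \<sigma> = pathstart \<sigma>"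
      using gab by (simp add: \<sigma>_def \<gamma>_def pathstart_def pathfinish_def linepath_def)
    define S where "S = path_image (\<phi> \<circ> \<sigma>)"
    have path_ph\<sigma>: "path (\<phi> \<circ> \<sigma>)"
      by (rule path_continuous_image[OF path\<sigma> continuous_on_subset[OF contphi pi\<sigma>]])
    have SY: "S \<subseteq> Y" using pi\<gamma> gY[OF i] by (auto simp: S_def \<sigma>_def path_image_def)
    have cS: "compact S" by (simp add: S_def compact_path_image path_ph\<sigma>)
    have connS: "connected S" by (simp add: S_def connected_path_image path_ph\<sigma>)
    define c where "c = \<phi> (\<sigma> 0)"
    have cS': "c \<in> S" by (simp add: c_def S_def path_image_def)
    then obtain k where k: "k < N" "c \<in> Ui k" using SY by (auto simp: Y_def U'_def)
    have SUk: "S \<subseteq> Ui k"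
      by (rule connected_in_one[OF connS _ _ Ui_disj k(1) cS' k(2)])
         (use SY openUi in \<open>auto simp: Y_def U'_def\<close>)
    have JUk: "compact (J \<inter> Ui k)"
    proof -
      have "J \<inter> Ui k = J - (\<Union>j\<in>{j. j<N \<and> j \<noteq> k}. Ui j)"
        using JU' Ui_disj k(1) by (auto simp: U'_def)
      moreover have "open (\<Union>j\<in>{j. j<N \<and> j \<noteq> k}. Ui j)" using openUi by auto
      ultimately show ?thesis using cJ by (simp add: compact_diff)
    qed
    have discUk: "\<exists>h. h holomorphic_on Ui k \<and> bij_betw h (Ui k) (ball 0 1)"
      using Ui_disc k(1) by (auto simp: conformal_disc_def)
    obtain \<rho> where cont\<rho>: "continuous_on UNIV \<rho>" and \<rho>W: "\<And>z. \<rho> z \<in> Ui k"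
      and \<rho>J: "\<And>z. z \<notin> J \<Longrightarrow> \<rho> z \<notin> J" and \<rho>S: "\<And>z. z \<in> S \<Longrightarrow> \<rho> z = z"
      using retract_lemma[OF openUi[OF k(1)] discUk JUk cS] SUk SY by (auto simp: Y_def)
    have UkU': "Ui k \<subseteq> U'" using k by (auto simp: U'_def)
    have h1: "homotopic_paths D \<sigma> (linepath (\<sigma> 0) (\<sigma> 0))"
    proof (rule homotopic_paths_linear[OF path\<sigma>])
      show "pathstart (linepath (\<sigma> 0) (\<sigma> 0)) = pathstart \<sigma>" by (simp add: pathstart_def)
      show "pathfinish (linepath (\<sigma> 0) (\<sigma> 0)) = pathfinish \<sigma>" using closed\<sigma> by (simp add: pathstart_def)
      fix t :: real assume t: "t \<in> {0..1}"
      have "\<sigma> t \<in> D" "\<sigma> 0 \<in> D" using pi\<sigma> t by (auto simp: path_image_def)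
      then show "closed_segment (\<sigma> t) (linepath (\<sigma> 0) (\<sigma> 0) t) \<subseteq> D"
        by (simp add: segD)
    qed simp
    have h2: "homotopic_paths Y ((\<rho> \<circ> \<phi>) \<circ> \<sigma>) ((\<rho> \<circ> \<phi>) \<circ> linepath (\<sigma> 0) (\<sigma> 0))"
    proof (rule homotopic_paths_continuous_image[OF h1])
      show "continuous_on D (\<rho> \<circ> \<phi>)"
        by (rule continuous_on_compose[OF contphi continuous_on_subset[OF cont\<rho>]]) auto
      show "\<rho> \<circ> \<phi> \<in> D \<rightarrow> Y"
      proof
        fix v assume "v \<in> D"
        then have "\<phi> v \<notin> J" using phiD by (auto simp: X_def)
        then show "(\<rho> \<circ> \<phi>) v \<in> Y" using \<rho>J \<rho>W UkU' by (auto simp: Y_def)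
      qed
    qed
    have h3: "homotopic_paths Y (\<phi> \<circ> \<sigma>) (linepath c c)"
    proof -
      have "homotopic_paths Y (\<phi> \<circ> \<sigma>) ((\<rho> \<circ> \<phi>) \<circ> \<sigma>)"
        by (rule homotopic_paths_eq[OF path_ph\<sigma>]) (use SY \<rho>S in \<open>auto simp: S_def path_image_def\<close>)
      moreover have "homotopic_paths Y (linepath c c) ((\<rho> \<circ> \<phi>) \<circ> linepath (\<sigma> 0) (\<sigma> 0))"
      proof (rule homotopic_paths_eq)
        show "path (linepath c c)" by simp
        show "path_image (linepath c c) \<subseteq> Y" using cS' SY by auto
        fix t :: real assume "t \<in> {0..1}"
        show "linepath c c t = ((\<rho> \<circ> \<phi>) \<circ> linepath (\<sigma> 0) (\<sigma> 0)) t"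
          using \<rho>S cS' by (simp add: c_def linepath_refl)
      qed
      ultimately show ?thesis using h2
        by (meson homotopic_paths_sym homotopic_paths_trans)
    qed
    have h4: "homotopic_paths X (f \<circ> (\<phi> \<circ> \<sigma>)) (f \<circ> linepath c c)"
      by (rule homotopic_paths_continuous_image[OF h3])
         (use holfY holomorphic_on_imp_continuous_on fYX in auto)
    have path_ph\<gamma>: "path (\<phi> \<circ> \<gamma>)"
      by (rule path_continuous_image[OF path\<gamma> continuous_on_subset[OF contphi pi\<gamma>]])
    have pi_ph\<gamma>: "path_image (\<phi> \<circ> \<gamma>) \<subseteq> X" using pi\<gamma> phiD by (auto simp: path_image_compose)
    have h5: "homotopic_paths X (\<phi> \<circ> \<gamma>) (linepath (\<phi> a) (\<phi> a))"
    proof -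
      have "homotopic_paths X (\<phi> \<circ> \<gamma>) (f \<circ> (\<phi> \<circ> \<sigma>))"
        by (rule homotopic_paths_eq[OF path_ph\<gamma> pi_ph\<gamma>]) (use gf[OF i] \<gamma>D in \<open>auto simp: \<sigma>_def\<close>)
      moreover have "f c = \<phi> a" using gf[OF i a] by (simp add: c_def \<sigma>_def \<gamma>_def linepath_def)
      then have feq: "f \<circ> linepath c c = linepath (\<phi> a) (\<phi> a)" by (simp add: linepath_refl o_def)
      have "\<phi> a \<in> X" using phiD a by blast
      then have "homotopic_paths X (f \<circ> linepath c c) (linepath (\<phi> a) (\<phi> a))"
        unfolding feq by (simp add: homotopic_paths_refl)
      ultimately show ?thesis using h4 by (meson homotopic_paths_trans)
    qed
    have "pathfinish \<gamma> = pathfinish (linepath a a)"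
    proof (rule covering_space_monodromy[OF covphi path_ph\<gamma> pi_ph\<gamma> _ _ h5 path\<gamma> pi\<gamma> _ _ _ _ _])
      show "path (linepath (\<phi> a) (\<phi> a))" by simp
      show "path_image (linepath (\<phi> a) (\<phi> a)) \<subseteq> X" using phiD a by auto
      show "path (linepath a a)" by simp
      show "path_image (linepath a a) \<subseteq> D" using a by auto
      show "\<And>t. t \<in> {0..1} \<Longrightarrow> \<phi> (\<gamma> t) = (\<phi> \<circ> \<gamma>) t" by simp
      show "\<And>t. t \<in> {0..1} \<Longrightarrow> \<phi> (linepath a a t) = linepath (\<phi> a) (\<phi> a) t"
        by (simp add: linepath_refl)
      show "pathstart \<gamma> = pathstart (linepath a a)" by (simp add: \<gamma>_def)
    qed
    then show "a = b" by (simp add: \<gamma>_def)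
  qed
  have seteq1: "{z \<in> U'. f z \<in> U - J} = U' - J"
    using backJ fYX fwd by (auto simp: X_def Y_def)
  have seteq2: "U' - J = (\<Union>i<d. \<phi> ` (g i ` D))"
  proof
    show "U' - J \<subseteq> (\<Union>i<d. \<phi> ` (g i ` D))"
    proof
      fix y assume y: "y \<in> U' - J"
      then have "f y \<in> X" using fYX by (simp add: Y_def)
      then obtain z where z: "z \<in> D" "\<phi> z = f y" using phiD by (metis imageE)
      then have "y \<in> (\<lambda>j. \<phi> (g j z)) ` {..<d}" using fiber[OF z(1)] y by auto
      then show "y \<in> (\<Union>i<d. \<phi> ` (g i ` D))" using z by auto
    qed
    show "(\<Union>i<d. \<phi> ` (g i ` D)) \<subseteq> U' - J" using gY by (auto simp: Y_def)
  qed
  show ?thesis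
    unfolding J_def[symmetric] D_def[symmetric]
    using holg injg gD gY gf g0 distinct fiber seteq1 seteq2
    by (intro exI[of _ g] conjI allI impI ballI) (auto simp: Y_def)
qed

end
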